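(* Let $\mathcal{I}$ be a finite index set (along a sequence with $|\mathcal{I}|\to\infty$), and for $i\in\mathcal{I}$ let $X_i$ be mutually independent real random variables with finite fourth moments, variances $\sigma_i^2>0$ and kurtosis $\kappa_i$. For each $i$ let $X_i^{(1)},\dots,X_i^{(R_i)}$ be i.i.d. copies of $X_i$, independent of each other across $i$ and of $(X_i)_i$, with mean $\bar X_i$. Let $X_{\mathcal{I}}=\sum_{i\in\mathcal{I}}X_i$, $\hat\mu_{\mathcal{I}}=\sum_{i\in\mathcal{I}}\bar X_i$, $\bar\sigma^2=\frac1{|\mathcal{I}|}\sum_i\sigma_i^2$, $\gamma^2=(\frac1{|\mathcal{I}|}\sum_i\sigma_i^4-\bar\sigma^4)/\bar\sigma^4$. Assume (R1) $R_i\ge2$ for all $i$, fixed integers; (R2) $\kappa_i\le\kappa_{\max}$ for all $i$, with $\kappa_{\max}$ independent of $|\mathcal{I}|$; (R3) $\gamma^2$ bounded as $|\mathcal{I}|\to\infty$. Then $$\frac{X_{\mathcal{I}}-\hat\mu_{\mathcal{I}}}{\sqrt{\operatorname{Var}(X_{\mathcal{I}}-\hat\mu_{\mathcal{I}})}}\xrightarrow{d}N(0,1)\quad\text{as }|\mathcal{I}|\to\infty.$$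
   Context: Kurtosis of $Y$ with variance $s^2$ is $\operatorname{E}[(Y-\operatorname{E}Y)^4]/s^4$. *)

theory Defs
  imports "HOL-Probability.Probability"
begin

definition kurtosis :: "'a measure \<Rightarrow> ('a \<Rightarrow> real) \<Rightarrow> real" where
  "kurtosis M Y = (\<integral>x. (Y x - (\<integral>z. Y z \<partial>M)) ^ 4 \<partial>M) / (prob_space.variance M Y) ^ 2"

definition sigma_bar_sq :: "'a measure \<Rightarrow> 'i set \<Rightarrow> ('i \<Rightarrow> 'a \<Rightarrow> real) \<Rightarrow> real" where
  "sigma_bar_sq M I X = (\<Sum>i\<in>I. prob_space.variance M (X i)) / real (card I)"

definition gamma_sq :: "'a measure \<Rightarrow> 'i set \<Rightarrow> ('i \<Rightarrow> 'a \<Rightarrow> real) \<Rightarrow> real" where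
  "gamma_sq M I X =
     ((\<Sum>i\<in>I. (prob_space.variance M (X i)) ^ 2) / real (card I) - (sigma_bar_sq M I X) ^ 2)
       / (sigma_bar_sq M I X) ^ 2"

end

theory Submission
  imports Defs
begin

lemma (in prob_space) low_moment:
  fixes f :: "'a \<Rightarrow> real"
  assumes [measurable]: "f \<in> borel_measurable M" and i4: "integrable M (\<lambda>x. f x ^ 4)" and k: "k \<le> 4"
  shows "integrable M (\<lambda>x. f x ^ k)"
proof (rule Bochner_Integration.integrable_bound[where f="\<lambda>x. 1 + f x ^ 4"])
  show "integrable M (\<lambda>x. 1 + f x ^ 4)" using i4 by auto
  show "(\<lambda>x. f x ^ k) \<in> borel_measurable M" by measurable
  show "AE x in M. norm (f x ^ k) \<le> norm (1 + f x ^ 4)"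
  proof (rule AE_I2)
    fix x
    have "\<bar>f x\<bar> ^ k \<le> 1 + \<bar>f x\<bar> ^ 4"
    proof (cases "\<bar>f x\<bar> \<le> 1")
      case True
      then have "\<bar>f x\<bar> ^ k \<le> 1" by (simp add: power_le_one)
      moreover have "0 \<le> \<bar>f x\<bar> ^ 4" by simp
      ultimately show ?thesis by linarith
    next
      case False
      then have "\<bar>f x\<bar> ^ k \<le> \<bar>f x\<bar> ^ 4" using k by (intro power_increasing) auto
      then show ?thesis by simp
    qed
    moreover have "\<bar>f x\<bar> ^ 4 = f x ^ 4" by (simp add: power_even_abs)
    ultimately show "norm (f x ^ k) \<le> norm (1 + f x ^ 4)"
      by (simp add: power_abs)
  qed
qed

lemma exp_approx_sq:
  fixes x :: real assumes "0 \<le> x"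
  shows "\<bar>(1 - x) - exp (- x)\<bar> \<le> x ^ 2"
proof -
  have a: "1 - x \<le> exp (-x)" using exp_ge_add_one_self[of "-x"] by simp
  have "1 + x \<le> exp x" by (rule exp_ge_add_one_self)
  then have "exp (-x) \<le> 1 / (1 + x)" using assms
    by (simp add: exp_minus field_simps)
  also have "1 / (1 + x) \<le> 1 - x + x^2" using assms
    by (simp add: field_simps power2_eq_square)
  finally show ?thesis using a by simp
qed

lemma cube_bound:
  fixes u e :: real assumes "e > 0"
  shows "\<bar>u\<bar> ^ 3 \<le> e * u^2 + u^4 / e"
proof (cases "\<bar>u\<bar> \<le> e")
  case True
  have "\<bar>u\<bar> ^ 3 = \<bar>u\<bar> * u^2" by (simp add: power_abs power2_eq_square power3_eq_cube abs_mult)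
  also have "\<dots> \<le> e * u^2" using True by (intro mult_right_mono) auto
  moreover have "0 \<le> u^4 / e" using assms by simp
  ultimately show ?thesis by linarith
next
  case False
  have "e * \<bar>u\<bar> ^ 3 \<le> \<bar>u\<bar> * \<bar>u\<bar>^3" using False by (intro mult_right_mono) auto
  also have "\<dots> = u ^ 4" by (simp add: power_abs flip: power_Suc)
  finally have "\<bar>u\<bar> ^ 3 \<le> u^4 / e" using assms by (simp add: field_simps mult.commute)
  moreover have "0 \<le> e * u^2" using assms by simp
  ultimately show ?thesis by linarith
qed


lemma (in prob_space) clt_step:
  fixes W :: "'j \<Rightarrow> 'a \<Rightarrow> real" and J :: "'j set" and s L e t :: real
  assumes fin: "finite J" and ind: "indep_vars (\<lambda>_. borel) W J"
    and i4: "\<And>i. i \<in> J \<Longrightarrow> integrable M (\<lambda>x. W i x ^ 4)"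
    and m0: "\<And>i. i \<in> J \<Longrightarrow> expectation (W i) = 0"
    and s_def: "s = (\<Sum>i\<in>J. expectation (\<lambda>x. W i x ^ 2))" and spos: "s > 0"
    and L_def: "L = (\<Sum>i\<in>J. expectation (\<lambda>x. W i x ^ 4)) / s^2"
    and epos: "e > 0"
  shows "cmod (char (distr M borel (\<lambda>x. (\<Sum>i\<in>J. W i x) / sqrt s)) t - complex_of_real (exp (- (t^2) / 2)))
           \<le> \<bar>t\<bar>^3 / 6 * (e + L / e) + t^4 / 4 * L"
proof -
  have rv: "random_variable borel (W i)" if "i \<in> J" for i
    using ind that unfolding indep_vars_def2 by simp
  define u where "u i x = W i x / sqrt s" for i x
  define v where "v i = expectation (\<lambda>x. W i x ^ 2) / s" for i
  define w where "w i = expectation (\<lambda>x. W i x ^ 4) / s^2" for i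
  define c where "c i = char (distr M borel (u i)) t" for i
  define xx where "xx i = t^2 * v i / 2" for i
  have rvu: "random_variable borel (u i)" if "i \<in> J" for i
    using rv[OF that] unfolding u_def by measurable
  have Wk: "integrable M (\<lambda>x. W i x ^ k)" if "i \<in> J" "k \<le> 4" for i k
    using low_moment[OF rv[OF that(1)] i4[OF that(1)] that(2)] .
  have sq4: "sqrt s ^ 4 = s^2"
  proof -
    have "sqrt s ^ 4 = (sqrt s ^ 2) ^ 2" by (simp flip: power_mult)
    then show ?thesis using spos by simp
  qed
  have u4eq: "(\<lambda>x. u i x ^ 4) = (\<lambda>x. W i x ^ 4 / s^2)" for i
    using spos by (auto simp: u_def power_divide fun_eq_iff sq4)
  have u2eq: "(\<lambda>x. u i x ^ 2) = (\<lambda>x. W i x ^ 2 / s)" for i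
    using spos by (auto simp: u_def power_divide fun_eq_iff)
  have uk: "integrable M (\<lambda>x. u i x ^ k)" if "i \<in> J" "k \<le> 4" for i k
  proof (rule low_moment[OF rvu[OF that(1)] _ that(2)])
    show "integrable M (\<lambda>x. u i x ^ 4)" unfolding u4eq using Wk[OF that(1), of 4] by simp
  qed
  have Eu4: "expectation (\<lambda>x. u i x ^ 4) = w i" for i unfolding u4eq w_def by simp
  have Eu2: "expectation (\<lambda>x. u i x ^ 2) = v i" for i unfolding u2eq v_def by simp
  have Eu: "expectation (u i) = 0" if "i \<in> J" for i
    using m0[OF that] unfolding u_def by simp
  have phi: "char (distr M borel (\<lambda>x. (\<Sum>i\<in>J. W i x) / sqrt s)) t = (\<Prod>i\<in>J. c i)"
  proof -
    have "(\<lambda>x. (\<Sum>i\<in>J. W i x) / sqrt s) = (\<lambda>x. \<Sum>i\<in>J. u i x)"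
      by (simp add: u_def sum_divide_distrib)
    moreover have "indep_vars (\<lambda>_. borel) u J"
      using indep_vars_compose2[OF ind, of "\<lambda>i y. y / sqrt s" "\<lambda>_. borel"] unfolding u_def by simp
    ultimately show ?thesis unfolding c_def by (simp add: char_distr_sum)
  qed
  have sumv: "(\<Sum>i\<in>J. v i) = 1"
    using spos by (simp add: v_def s_def flip: sum_divide_distrib)
  have sumw: "(\<Sum>i\<in>J. w i) = L"
    by (simp add: w_def L_def flip: sum_divide_distrib)
  have sumxx: "(\<Sum>i\<in>J. xx i) = t^2 / 2"
    unfolding xx_def using sumv by (simp flip: sum_divide_distrib sum_distrib_left)
  have target: "complex_of_real (exp (- (t^2) / 2)) = (\<Prod>i\<in>J. complex_of_real (exp (- xx i)))"
  proof -
    have "exp (- (t^2) / 2) = exp (\<Sum>i\<in>J. - xx i)" using sumxx by (simp add: sum_negf)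
    also have "\<dots> = (\<Prod>i\<in>J. exp (- xx i))" by (rule exp_sum[OF fin])
    finally show ?thesis by simp
  qed
  have v_nn: "v i \<ge> 0" for i using spos unfolding v_def by (simp add: integral_nonneg_AE)
  have vw: "v i ^ 2 \<le> w i" if "i \<in> J" for i
  proof -
    have "0 \<le> variance (\<lambda>x. W i x ^ 2)" by (simp add: integral_nonneg_AE)
    also have "\<dots> = expectation (\<lambda>x. (W i x ^ 2)^2) - (expectation (\<lambda>x. W i x ^ 2))^2"
      by (rule variance_eq) (use Wk[OF that, of 2] Wk[OF that, of 4] in \<open>simp_all flip: power_mult\<close>)
    finally have "(expectation (\<lambda>x. W i x ^ 2))^2 \<le> expectation (\<lambda>x. W i x ^ 4)"
      by (simp flip: power_mult)
    then show ?thesis using spos unfolding v_def w_def by (simp add: power_divide divide_right_mono)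
  qed
  have b1: "cmod (c i - complex_of_real (1 - xx i)) \<le> \<bar>t\<bar>^3 / 6 * (e * v i + w i / e)" if "i \<in> J" for i
  proof -
    have "cmod (c i - (1 - t^2 * v i / 2)) \<le> (t^2 / 6) * expectation (\<lambda>x. min (6 * (u i x)^2) (\<bar>t\<bar> * \<bar>u i x\<bar>^3))"
      unfolding c_def
      by (rule char_approx3'[OF rvu[OF that]]) (use uk[OF that, of 1] uk[OF that, of 2] Eu[OF that] Eu2 in auto)
    also have "\<dots> \<le> (t^2 / 6) * expectation (\<lambda>x. \<bar>t\<bar> * (e * u i x ^ 2 + u i x ^ 4 / e))"
    proof (intro mult_left_mono integral_mono)
      have i3: "integrable M (\<lambda>x. \<bar>u i x\<bar> ^ 3)"
        using integrable_abs[OF uk[OF that, of 3]] by (simp add: power_abs)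
      show "integrable M (\<lambda>x. min (6 * (u i x)^2) (\<bar>t\<bar> * \<bar>u i x\<bar>^3))"
        using uk[OF that, of 2] i3 by (intro integrable_min) auto
      show "integrable M (\<lambda>x. \<bar>t\<bar> * (e * u i x ^ 2 + u i x ^ 4 / e))"
        using uk[OF that, of 2] uk[OF that, of 4] by auto
      fix x
      have "min (6 * (u i x)^2) (\<bar>t\<bar> * \<bar>u i x\<bar>^3) \<le> \<bar>t\<bar> * \<bar>u i x\<bar>^3" by simp
      also have "\<dots> \<le> \<bar>t\<bar> * (e * u i x ^ 2 + u i x ^ 4 / e)"
        by (intro mult_left_mono cube_bound epos) simp
      finally show "min (6 * (u i x)^2) (\<bar>t\<bar> * \<bar>u i x\<bar>^3) \<le> \<bar>t\<bar> * (e * u i x ^ 2 + u i x ^ 4 / e)" .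
    qed simp
    also have "expectation (\<lambda>x. \<bar>t\<bar> * (e * u i x ^ 2 + u i x ^ 4 / e)) = \<bar>t\<bar> * (e * v i + w i / e)"
      using uk[OF that, of 2] uk[OF that, of 4] by (simp add: Eu2 Eu4)
    also have "t^2 / 6 * (\<bar>t\<bar> * (e * v i + w i / e)) = \<bar>t\<bar>^3 / 6 * (e * v i + w i / e)"
      by (simp add: power2_eq_square power3_eq_cube abs_mult_self_eq)
    also have "(1 - t^2 * v i / 2) = complex_of_real (1 - xx i)"
      by (simp add: xx_def)
    finally show ?thesis .
  qed
  have b2: "cmod (complex_of_real (1 - xx i) - complex_of_real (exp (- xx i))) \<le> t^4 / 4 * w i" if "i \<in> J" for i
  proof -
    have "cmod (complex_of_real (1 - xx i) - complex_of_real (exp (- xx i))) = \<bar>(1 - xx i) - exp (- xx i)\<bar>"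
      by (simp flip: of_real_diff)
    also have "\<dots> \<le> xx i ^ 2" by (rule exp_approx_sq) (simp add: xx_def v_nn)
    also have "\<dots> = t^4 / 4 * v i ^ 2" by (simp add: xx_def power_mult_distrib power_divide flip: power_mult)
    also have "\<dots> \<le> t^4 / 4 * w i" by (intro mult_left_mono vw that) simp
    finally show ?thesis .
  qed
  have "cmod ((\<Prod>i\<in>J. c i) - (\<Prod>i\<in>J. complex_of_real (exp (- xx i)))) \<le> (\<Sum>i\<in>J. cmod (c i - complex_of_real (exp (- xx i))))"
  proof (rule norm_prod_diff)
    fix i assume "i \<in> J"
    show "cmod (c i) \<le> 1" unfolding c_def
      by (rule real_distribution.cmod_char_le_1) (simp add: real_distribution_distr rvu[OF \<open>i \<in> J\<close>])
    show "cmod (complex_of_real (exp (- xx i))) \<le> 1" by (simp add: xx_def v_nn)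
  qed
  also have "\<dots> \<le> (\<Sum>i\<in>J. \<bar>t\<bar>^3 / 6 * (e * v i + w i / e) + t^4 / 4 * w i)"
  proof (rule sum_mono)
    fix i assume i: "i \<in> J"
    have "cmod (c i - complex_of_real (exp (- xx i))) \<le> cmod (c i - complex_of_real (1 - xx i)) + cmod (complex_of_real (1 - xx i) - complex_of_real (exp (- xx i)))"
      using norm_triangle_ineq[of "c i - complex_of_real (1 - xx i)" "complex_of_real (1 - xx i) - complex_of_real (exp (- xx i))"]
      by simp
    then show "cmod (c i - complex_of_real (exp (- xx i))) \<le> \<bar>t\<bar>^3 / 6 * (e * v i + w i / e) + t^4 / 4 * w i"
      using b1[OF i] b2[OF i] by linarith
  qed
  also have "\<dots> = \<bar>t\<bar>^3 / 6 * (e * (\<Sum>i\<in>J. v i) + (\<Sum>i\<in>J. w i) / e) + t^4 / 4 * (\<Sum>i\<in>J. w i)"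
    by (simp add: sum.distrib sum_distrib_left sum_divide_distrib distrib_left)
  also have "\<dots> = \<bar>t\<bar>^3 / 6 * (e + L / e) + t^4 / 4 * L" by (simp add: sumv sumw)
  finally show ?thesis unfolding phi target .
qed


lemma clt_lyap:
  fixes M :: "nat \<Rightarrow> 'a measure" and J :: "nat \<Rightarrow> 'j set" and W :: "nat \<Rightarrow> 'j \<Rightarrow> 'a \<Rightarrow> real"
    and s :: "nat \<Rightarrow> real"
  assumes prob: "\<And>n. prob_space (M n)" and fin: "\<And>n. finite (J n)"
    and ind: "\<And>n. prob_space.indep_vars (M n) (\<lambda>_. borel) (W n) (J n)"
    and i4: "\<And>n i. i \<in> J n \<Longrightarrow> integrable (M n) (\<lambda>x. W n i x ^ 4)"
    and m0: "\<And>n i. i \<in> J n \<Longrightarrow> integral\<^sup>L (M n) (W n i) = 0"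
    and s_def: "\<And>n. s n = (\<Sum>i\<in>J n. \<integral>x. W n i x ^ 2 \<partial>M n)"
    and spos: "eventually (\<lambda>n. s n > 0) sequentially"
    and Llim: "(\<lambda>n. (\<Sum>i\<in>J n. \<integral>x. W n i x ^ 4 \<partial>M n) / s n ^ 2) \<longlonglongrightarrow> 0"
  shows "weak_conv_m (\<lambda>n. distr (M n) borel (\<lambda>x. (\<Sum>i\<in>J n. W n i x) / sqrt (s n))) std_normal_distribution"
proof (rule levy_continuity)
  define L where "L n = (\<Sum>i\<in>J n. \<integral>x. W n i x ^ 4 \<partial>M n) / s n ^ 2" for n
  define e where "e n = sqrt (L n) + 1 / real (Suc n)" for n
  have rv: "W n i \<in> borel_measurable (M n)" if "i \<in> J n" for n i
    using ind[of n] that unfolding prob_space.indep_vars_def2[OF prob[of n]] by blast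
  have rvS: "(\<lambda>x. (\<Sum>i\<in>J n. W n i x) / sqrt (s n)) \<in> borel_measurable (M n)" for n
    using rv[of _ n] by (intro borel_measurable_divide borel_measurable_sum) auto
  show "real_distribution (distr (M n) borel (\<lambda>x. (\<Sum>i\<in>J n. W n i x) / sqrt (s n)))" for n
    by (rule prob_space.real_distribution_distr[OF prob rvS])
  show "real_distribution std_normal_distribution" by (rule real_dist_normal_dist)
  fix t :: real
  define B where "B n = \<bar>t\<bar>^3 / 6 * (2 * sqrt (L n) + 1 / real (Suc n)) + t^4 / 4 * L n" for n
  have ev: "eventually (\<lambda>n. norm (char (distr (M n) borel (\<lambda>x. (\<Sum>i\<in>J n. W n i x) / sqrt (s n))) t
               - complex_of_real (exp (- (t^2) / 2))) \<le> B n) sequentially"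
    using spos
  proof eventually_elim
    case (elim n)
    have Lnn: "L n \<ge> 0" unfolding L_def
      by (intro divide_nonneg_nonneg sum_nonneg integral_nonneg_AE) auto
    have epos: "e n > 0" unfolding e_def using Lnn by (simp add: add_nonneg_pos)
    have Le: "L n / e n \<le> sqrt (L n)"
    proof -
      have "L n = sqrt (L n) * sqrt (L n)" using Lnn by simp
      then have "L n / e n = sqrt (L n) * (sqrt (L n) / e n)" by simp
      also have "\<dots> \<le> sqrt (L n) * 1"
        using epos Lnn by (intro mult_left_mono) (auto simp: e_def)
      finally show ?thesis by simp
    qed
    have "norm (char (distr (M n) borel (\<lambda>x. (\<Sum>i\<in>J n. W n i x) / sqrt (s n))) t
               - complex_of_real (exp (- (t^2) / 2))) \<le> \<bar>t\<bar>^3 / 6 * (e n + L n / e n) + t^4 / 4 * L n"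
      by (rule prob_space.clt_step[OF prob fin ind i4 m0 s_def elim L_def epos])
    also have "\<dots> \<le> B n"
    proof -
      have "e n + L n / e n \<le> 2 * sqrt (L n) + 1 / real (Suc n)" using Le unfolding e_def by linarith
      then show ?thesis unfolding B_def by (intro add_right_mono mult_left_mono) auto
    qed
    finally show ?case .
  qed
  have "B \<longlonglongrightarrow> \<bar>t\<bar>^3 / 6 * (2 * sqrt 0 + 0) + t^4 / 4 * 0"
    unfolding B_def L_def
    by (intro tendsto_intros Llim LIMSEQ_Suc[OF lim_inverse_n'])
  then have "B \<longlonglongrightarrow> 0" by simp
  then have "(\<lambda>n. char (distr (M n) borel (\<lambda>x. (\<Sum>i\<in>J n. W n i x) / sqrt (s n))) t
               - complex_of_real (exp (- (t^2) / 2))) \<longlonglongrightarrow> 0"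
    by (rule Lim_null_comparison[OF ev])
  then show "(\<lambda>n. char (distr (M n) borel (\<lambda>x. (\<Sum>i\<in>J n. W n i x) / sqrt (s n))) t) \<longlonglongrightarrow> char std_normal_distribution t"
    unfolding char_std_normal_distribution by (rule LIM_zero_cancel)
qed


lemma avg_pow4:
  fixes y :: "nat \<Rightarrow> real" assumes R: "R > 0"
  shows "((\<Sum>r<R. y r) / real R) ^ 4 \<le> (\<Sum>r<R. y r ^ 4) / real R"
proof -
  have "(\<lambda>x::real. x ^ 4) ((\<Sum>r\<in>{..<R}. (1 / real R) *\<^sub>R y r)) \<le> (\<Sum>r\<in>{..<R}. (1 / real R) * (\<lambda>x. x ^ 4) (y r))"
    by (rule convex_on_sum[OF _ _ convex_power_even[of 4]]) (use R in auto)
  then show ?thesis by (simp add: sum_divide_distrib)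
qed

lemma pow4_add:
  fixes a b :: real
  shows "(a - b) ^ 4 \<le> 8 * (a ^ 4 + b ^ 4)"
proof -
  have e1: "2 * (a^2 + b^2) - (a - b)^2 = (a + b)^2" by (simp add: power2_eq_square algebra_simps)
  have h1: "(a - b)^2 \<le> 2 * (a^2 + b^2)" using e1 zero_le_power2[of "a+b"] by linarith
  have "(a - b)^4 = ((a - b)^2)^2" by (simp flip: power_mult)
  also have "\<dots> \<le> (2 * (a^2 + b^2))^2" using h1 by (intro power_mono) auto
  also have "\<dots> = 4 * (a^2 + b^2)^2" by (simp add: power2_eq_square algebra_simps)
  also have "(a^2 + b^2)^2 \<le> 2 * (a^4 + b^4)"
  proof -
    have "2 * (a^4 + b^4) - (a^2 + b^2)^2 = (a^2 - b^2)^2" by (simp add: power2_eq_square algebra_simps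
         flip: power_mult_distrib power_add) (simp add: power_def algebra_simps)
    then show ?thesis using zero_le_power2[of "a^2 - b^2"] by linarith
  qed
  then have "4 * (a^2 + b^2)^2 \<le> 8 * (a^4 + b^4)" by linarith
  finally show ?thesis .
qed

lemma (in prob_space) distr_transfer:
  fixes X Y :: "'a \<Rightarrow> real" and f :: "real \<Rightarrow> real"
  assumes [measurable]: "X \<in> borel_measurable M" "Y \<in> borel_measurable M" "f \<in> borel_measurable borel"
    and d: "distr M borel Y = distr M borel X"
  shows "integrable M (\<lambda>x. f (Y x)) = integrable M (\<lambda>x. f (X x))"
    and "expectation (\<lambda>x. f (Y x)) = expectation (\<lambda>x. f (X x))"
proof -
  have "integrable M (\<lambda>x. f (Y x)) = integrable (distr M borel Y) f"
    by (simp add: integrable_distr_eq)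
  also have "\<dots> = integrable M (\<lambda>x. f (X x))" unfolding d by (simp add: integrable_distr_eq)
  finally show "integrable M (\<lambda>x. f (Y x)) = integrable M (\<lambda>x. f (X x))" .
  have "expectation (\<lambda>x. f (Y x)) = integral\<^sup>L (distr M borel Y) f"
    by (simp add: integral_distr)
  also have "\<dots> = expectation (\<lambda>x. f (X x))" unfolding d by (simp add: integral_distr)
  finally show "expectation (\<lambda>x. f (Y x)) = expectation (\<lambda>x. f (X x))" .
qed

lemma (in prob_space) pair_prod:
  fixes Z :: "'k \<Rightarrow> 'a \<Rightarrow> real"
  assumes ind: "indep_vars (\<lambda>_. borel) Z K" and k: "k1 \<in> K" "k2 \<in> K" "k1 \<noteq> k2"
    and i: "integrable M (Z k1)" "integrable M (Z k2)"
  shows "expectation (\<lambda>x. Z k1 x * Z k2 x) = expectation (Z k1) * expectation (Z k2)"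
    and "integrable M (\<lambda>x. Z k1 x * Z k2 x)"
proof -
  have ind2: "indep_vars (\<lambda>_. borel) Z {k1, k2}" by (rule indep_vars_subset[OF ind]) (use k in auto)
  have ii: "\<And>k. k \<in> {k1, k2} \<Longrightarrow> integrable M (Z k)" using i by auto
  have "(\<integral>x. (\<Prod>k\<in>{k1,k2}. Z k x) \<partial>M) = (\<Prod>k\<in>{k1,k2}. \<integral>x. Z k x \<partial>M)"
    by (rule indep_vars_lebesgue_integral[OF _ ind2 ii]) auto
  then show "expectation (\<lambda>x. Z k1 x * Z k2 x) = expectation (Z k1) * expectation (Z k2)"
    using k by simp
  have "integrable M (\<lambda>x. (\<Prod>k\<in>{k1,k2}. Z k x))"
    by (rule indep_vars_integrable[OF _ ind2 ii]) auto
  then show "integrable M (\<lambda>x. Z k1 x * Z k2 x)" using k by simp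
qed

lemma (in prob_space) sum_var:
  fixes W :: "'j \<Rightarrow> 'a \<Rightarrow> real"
  assumes fin: "finite J" and ind: "indep_vars (\<lambda>_. borel) W J"
    and i2: "\<And>i. i \<in> J \<Longrightarrow> integrable M (\<lambda>x. W i x ^ 2)"
    and m0: "\<And>i. i \<in> J \<Longrightarrow> expectation (W i) = 0"
  shows "variance (\<lambda>x. \<Sum>i\<in>J. W i x) = (\<Sum>i\<in>J. expectation (\<lambda>x. W i x ^ 2))"
proof -
  have rv: "W i \<in> borel_measurable M" if "i \<in> J" for i
    using ind that unfolding indep_vars_def2 by simp
  have i1: "integrable M (W i)" if "i \<in> J" for i
    using square_integrable_imp_integrable[OF rv[OF that] i2[OF that]] .
  have iprod: "integrable M (\<lambda>x. W i x * W j x)" if "i \<in> J" "j \<in> J" for i j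
  proof (cases "i = j")
    case True then show ?thesis using i2[OF that(1)] by (simp add: power2_eq_square)
  next
    case False then show ?thesis using pair_prod(2)[OF ind that False i1[OF that(1)] i1[OF that(2)]] by simp
  qed
  have Eprod: "expectation (\<lambda>x. W i x * W j x) = (if i = j then expectation (\<lambda>x. W i x ^ 2) else 0)"
    if "i \<in> J" "j \<in> J" for i j
  proof (cases "i = j")
    case True then show ?thesis by (simp add: power2_eq_square)
  next
    case False then show ?thesis using pair_prod(1)[OF ind that False i1[OF that(1)] i1[OF that(2)]] m0 that by simp
  qed
  have E0: "expectation (\<lambda>x. \<Sum>i\<in>J. W i x) = 0"
    using i1 m0 by (simp add: Bochner_Integration.integral_sum)
  have "variance (\<lambda>x. \<Sum>i\<in>J. W i x) = expectation (\<lambda>x. \<Sum>i\<in>J. \<Sum>j\<in>J. W i x * W j x)"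
    unfolding E0 by (simp add: power2_eq_square sum_product)
  also have "\<dots> = (\<Sum>i\<in>J. \<Sum>j\<in>J. expectation (\<lambda>x. W i x * W j x))"
    using iprod by (simp add: Bochner_Integration.integral_sum integrable_sum)
  also have "\<dots> = (\<Sum>i\<in>J. \<Sum>j\<in>J. (if i = j then expectation (\<lambda>x. W i x ^ 2) else 0))"
    by (intro sum.cong refl) (simp add: Eprod)
  also have "\<dots> = (\<Sum>i\<in>J. expectation (\<lambda>x. W i x ^ 2))"
    using fin by (simp add: sum.delta)
  finally show ?thesis .
qed


lemma (in prob_space) block:
  fixes X :: "'a \<Rightarrow> real" and Y :: "nat \<Rightarrow> 'a \<Rightarrow> real" and R :: nat
  assumes rvX[measurable]: "X \<in> borel_measurable M"
    and rvY: "\<And>r. r < R \<Longrightarrow> Y r \<in> borel_measurable M" and R: "R \<ge> 1"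
    and dist: "\<And>r. r < R \<Longrightarrow> distr M borel (Y r) = distr M borel X"
    and i4: "integrable M (\<lambda>x. X x ^ 4)"
    and crossi: "\<And>r. r < R \<Longrightarrow> integrable M (\<lambda>x. X x * Y r x)"
    and cross: "\<And>r. r < R \<Longrightarrow> expectation (\<lambda>x. X x * Y r x) = expectation X * expectation (Y r)"
  shows "integrable M (\<lambda>x. (X x - (\<Sum>r<R. Y r x) / real R) ^ 4)"
    and "expectation (\<lambda>x. X x - (\<Sum>r<R. Y r x) / real R) = 0"
    and "variance X \<le> expectation (\<lambda>x. (X x - (\<Sum>r<R. Y r x) / real R) ^ 2)"
    and "expectation (\<lambda>x. (X x - (\<Sum>r<R. Y r x) / real R) ^ 4) \<le> 16 * expectation (\<lambda>x. (X x - expectation X) ^ 4)"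
proof -
  define \<mu> where "\<mu> = expectation X"
  define A where "A x = X x - \<mu>" for x
  define B where "B x = (\<Sum>r<R. Y r x - \<mu>) / real R" for x
  define W where "W x = X x - (\<Sum>r<R. Y r x) / real R" for x
  have Rpos: "real R > 0" using R by simp
  have WAB: "W x = A x - B x" for x
    using Rpos by (simp add: W_def A_def B_def sum_subtractf diff_divide_distrib)
  have [measurable]: "A \<in> borel_measurable M" unfolding A_def by measurable
  have rvW[measurable]: "W \<in> borel_measurable M" unfolding W_def using rvY
    by (intro borel_measurable_diff borel_measurable_divide borel_measurable_sum) auto
  have Xk: "integrable M (\<lambda>x. X x ^ k)" if "k \<le> 4" for k by (rule low_moment[OF rvX i4 that])
  have X1: "integrable M X" using Xk[of 1] by simp
  have Yk: "integrable M (\<lambda>x. Y r x ^ k)" if "r < R" "k \<le> 4" for r k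
    using distr_transfer(1)[OF rvX rvY[OF that(1)] _ dist[OF that(1)], of "\<lambda>y. y ^ k"] Xk[OF that(2)] by simp
  have Y1: "integrable M (Y r)" if "r < R" for r using Yk[OF that, of 1] by simp
  have EY: "expectation (Y r) = \<mu>" if "r < R" for r
    using distr_transfer(2)[OF rvX rvY[OF that] _ dist[OF that], of "\<lambda>y. y"] unfolding \<mu>_def by simp
  have A4: "integrable M (\<lambda>x. A x ^ 4)"
  proof (rule Bochner_Integration.integrable_bound[where f="\<lambda>x. 8 * (X x ^ 4 + \<mu> ^ 4)"])
    show "integrable M (\<lambda>x. 8 * (X x ^ 4 + \<mu> ^ 4))" using i4 by auto
    show "(\<lambda>x. A x ^ 4) \<in> borel_measurable M" by measurable
    show "AE x in M. norm (A x ^ 4) \<le> norm (8 * (X x ^ 4 + \<mu> ^ 4))"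
      using pow4_add[of "X _" \<mu>] unfolding A_def by (auto intro!: AE_I2 simp: abs_of_nonneg add_nonneg_nonneg)
  qed
  have Ak: "integrable M (\<lambda>x. A x ^ k)" if "k \<le> 4" for k by (rule low_moment[OF _ A4 that]) simp
  have Yc4i: "integrable M (\<lambda>x. (Y r x - \<mu>) ^ 4)" if "r < R" for r
    using distr_transfer(1)[OF rvX rvY[OF that] _ dist[OF that], of "\<lambda>y. (y - \<mu>) ^ 4"] A4 unfolding A_def by simp
  have Yc4e: "expectation (\<lambda>x. (Y r x - \<mu>) ^ 4) = expectation (\<lambda>x. A x ^ 4)" if "r < R" for r
    using distr_transfer(2)[OF rvX rvY[OF that] _ dist[OF that], of "\<lambda>y. (y - \<mu>) ^ 4"] unfolding A_def by simp
  have Bbound: "B x ^ 4 \<le> (\<Sum>r<R. (Y r x - \<mu>) ^ 4) / real R" for x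
    unfolding B_def using avg_pow4[of R "\<lambda>r. Y r x - \<mu>"] R by simp
  have Wbound: "W x ^ 4 \<le> 8 * (A x ^ 4 + (\<Sum>r<R. (Y r x - \<mu>) ^ 4) / real R)" for x
    unfolding WAB by (rule order_trans[OF pow4_add]) (use Bbound[of x] in simp)
  have iRHS: "integrable M (\<lambda>x. 8 * (A x ^ 4 + (\<Sum>r<R. (Y r x - \<mu>) ^ 4) / real R))"
    using A4 Yc4i by (intro integrable_mult_right Bochner_Integration.integrable_add integrable_divide integrable_sum) auto
  have W4: "integrable M (\<lambda>x. W x ^ 4)"
  proof (rule Bochner_Integration.integrable_bound[OF iRHS])
    show "(\<lambda>x. W x ^ 4) \<in> borel_measurable M" by measurable
    show "AE x in M. norm (W x ^ 4) \<le> norm (8 * (A x ^ 4 + (\<Sum>r<R. (Y r x - \<mu>) ^ 4) / real R))"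
    proof (rule AE_I2)
      fix x
      have "0 \<le> W x ^ 4" by simp
      then show "norm (W x ^ 4) \<le> norm (8 * (A x ^ 4 + (\<Sum>r<R. (Y r x - \<mu>) ^ 4) / real R))"
        using Wbound[of x] by simp
    qed
  qed
  then show "integrable M (\<lambda>x. (X x - (\<Sum>r<R. Y r x) / real R) ^ 4)" unfolding W_def .
  have "expectation (\<lambda>x. W x ^ 4) \<le> expectation (\<lambda>x. 8 * (A x ^ 4 + (\<Sum>r<R. (Y r x - \<mu>) ^ 4) / real R))"
    by (rule integral_mono[OF W4 iRHS Wbound])
  also have "\<dots> = 8 * (expectation (\<lambda>x. A x ^ 4) + (\<Sum>r<R. expectation (\<lambda>x. (Y r x - \<mu>) ^ 4)) / real R)"
  proof -
    have iS: "integrable M (\<lambda>x. (\<Sum>r<R. (Y r x - \<mu>) ^ 4) / real R)" using Yc4i by (intro integrable_divide integrable_sum) auto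
    have eS: "expectation (\<lambda>x. \<Sum>r<R. (Y r x - \<mu>) ^ 4) = (\<Sum>r<R. expectation (\<lambda>x. (Y r x - \<mu>) ^ 4))"
      using Yc4i by (intro Bochner_Integration.integral_sum) auto
    show ?thesis
      by (simp only: integral_mult_right_zero Bochner_Integration.integral_add[OF A4 iS] integral_divide_zero eS)
  qed
  also have "(\<Sum>r<R. expectation (\<lambda>x. (Y r x - \<mu>) ^ 4)) = (\<Sum>r<R. expectation (\<lambda>x. A x ^ 4))"
    by (rule sum.cong) (auto simp: Yc4e)
  also have "8 * (expectation (\<lambda>x. A x ^ 4) + (\<Sum>r<R. expectation (\<lambda>x. A x ^ 4)) / real R) = 16 * expectation (\<lambda>x. A x ^ 4)"
    using Rpos by simp
  finally show "expectation (\<lambda>x. (X x - (\<Sum>r<R. Y r x) / real R) ^ 4) \<le> 16 * expectation (\<lambda>x. (X x - expectation X) ^ 4)"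
    unfolding W_def A_def \<mu>_def .
  show "expectation (\<lambda>x. X x - (\<Sum>r<R. Y r x) / real R) = 0"
  proof -
    have iS: "integrable M (\<lambda>x. (\<Sum>r<R. Y r x) / real R)" using Y1 by (intro integrable_divide integrable_sum) auto
    have eS: "expectation (\<lambda>x. \<Sum>r<R. Y r x) = (\<Sum>r<R. expectation (Y r))"
      using Y1 by (intro Bochner_Integration.integral_sum) auto
    also have "\<dots> = (\<Sum>r<R. \<mu>)" by (rule sum.cong) (auto simp: EY)
    finally have "expectation (\<lambda>x. \<Sum>r<R. Y r x) = real R * \<mu>" by simp
    then show ?thesis
      using Rpos by (simp add: Bochner_Integration.integral_diff[OF X1 iS] \<mu>_def)
  qed
  have ABi: "integrable M (\<lambda>x. A x * (Y r x - \<mu>))" if "r < R" for r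
  proof -
    have "(\<lambda>x. A x * (Y r x - \<mu>)) = (\<lambda>x. X x * Y r x - \<mu> * Y r x - \<mu> * X x + \<mu> * \<mu>)"
      by (auto simp: A_def algebra_simps)
    then show ?thesis using crossi[OF that] X1 Y1[OF that] by simp
  qed
  have ABe: "expectation (\<lambda>x. A x * (Y r x - \<mu>)) = 0" if "r < R" for r
  proof -
    have "(\<lambda>x. A x * (Y r x - \<mu>)) = (\<lambda>x. X x * Y r x - \<mu> * Y r x - \<mu> * X x + \<mu> * \<mu>)"
      by (auto simp: A_def algebra_simps)
    then show ?thesis using crossi[OF that] X1 Y1[OF that] cross[OF that] EY[OF that]
      by (simp add: \<mu>_def prob_space)
  qed
  have AB: "(\<lambda>x. A x * B x) = (\<lambda>x. (\<Sum>r<R. A x * (Y r x - \<mu>)) / real R)"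
    by (simp add: B_def sum_distrib_left)
  have ABi': "integrable M (\<lambda>x. A x * B x)" unfolding AB using ABi by (intro integrable_divide integrable_sum) auto
  have ABe': "expectation (\<lambda>x. A x * B x) = 0"
  proof -
    have "expectation (\<lambda>x. \<Sum>r<R. A x * (Y r x - \<mu>)) = (\<Sum>r<R. expectation (\<lambda>x. A x * (Y r x - \<mu>)))"
      using ABi by (intro Bochner_Integration.integral_sum) auto
    also have "\<dots> = 0" using ABe by simp
    finally show ?thesis unfolding AB by simp
  qed
  have W2: "integrable M (\<lambda>x. W x ^ 2)" by (rule low_moment[OF rvW W4]) simp
  have "variance X = expectation (\<lambda>x. A x ^ 2 - 2 * (A x * B x))"
    using Ak[of 2] ABi' ABe' by (simp add: A_def \<mu>_def)
  also have "\<dots> \<le> expectation (\<lambda>x. W x ^ 2)"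
  proof (rule integral_mono)
    show "integrable M (\<lambda>x. A x ^ 2 - 2 * (A x * B x))" using Ak[of 2] ABi' by auto
    show "integrable M (\<lambda>x. W x ^ 2)" by (rule W2)
    fix x
    have "W x ^ 2 = A x ^ 2 - 2 * (A x * B x) + B x ^ 2" unfolding WAB by (simp add: power2_eq_square algebra_simps)
    then show "A x ^ 2 - 2 * (A x * B x) \<le> W x ^ 2" using zero_le_power2[of "B x"] by linarith
  qed
  finally show "variance X \<le> expectation (\<lambda>x. (X x - (\<Sum>r<R. Y r x) / real R) ^ 2)" unfolding W_def .
qed



theorem lemma4:
  fixes M :: "nat \<Rightarrow> 'a measure"
    and I :: "nat \<Rightarrow> 'i set"
    and X :: "nat \<Rightarrow> 'i \<Rightarrow> 'a \<Rightarrow> real"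
    and R :: "nat \<Rightarrow> 'i \<Rightarrow> nat"
    and Y :: "nat \<Rightarrow> 'i \<Rightarrow> nat \<Rightarrow> 'a \<Rightarrow> real"
    and \<kappa>max :: real
  assumes prob: "\<And>n. prob_space (M n)"
    and fin: "\<And>n. finite (I n)"
    and card_lim: "filterlim (\<lambda>n. card (I n)) at_top sequentially"
    and indep: "\<And>n. prob_space.indep_vars (M n) (\<lambda>_. borel)
                  (\<lambda>k. case k of Inl i \<Rightarrow> X n i | Inr (i, r) \<Rightarrow> Y n i r)
                  (Inl ` I n \<union> Inr ` (SIGMA i:I n. {..<R n i}))"
    and copies: "\<And>n i r. i \<in> I n \<Longrightarrow> r < R n i \<Longrightarrow>
                  distr (M n) borel (Y n i r) = distr (M n) borel (X n i)"
    and fourth: "\<And>n i. i \<in> I n \<Longrightarrow> integrable (M n) (\<lambda>x. (X n i x) ^ 4)"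
    and var_pos: "\<And>n i. i \<in> I n \<Longrightarrow> prob_space.variance (M n) (X n i) > 0"
    and R1: "\<And>n i. i \<in> I n \<Longrightarrow> R n i \<ge> 2"
    and R2: "\<And>n i. i \<in> I n \<Longrightarrow> kurtosis (M n) (X n i) \<le> \<kappa>max"
    and R3: "\<exists>B. \<forall>n. gamma_sq (M n) (I n) (X n) \<le> B"
  shows "weak_conv_m
           (\<lambda>n. distr (M n) borel
              (\<lambda>x. (\<Sum>i\<in>I n. X n i x - (\<Sum>r<R n i. Y n i r x) / real (R n i))
                   / sqrt (prob_space.variance (M n)
                       (\<lambda>z. \<Sum>i\<in>I n. X n i z - (\<Sum>r<R n i. Y n i r z) / real (R n i)))))
           std_normal_distribution"
  proof -
  define K where "K n = Inl ` I n \<union> Inr ` (SIGMA i:I n. {..<R n i})" for n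
  define Z where "Z n k = (case k of Inl i \<Rightarrow> X n i | Inr (i, r) \<Rightarrow> Y n i r)" for n k
  define W where "W n i x = X n i x - (\<Sum>r<R n i. Y n i r x) / real (R n i)" for n i x
  define s where "s n = prob_space.variance (M n) (\<lambda>z. \<Sum>i\<in>I n. W n i z)" for n
  define \<sigma>2 where "\<sigma>2 n i = prob_space.variance (M n) (X n i)" for n i
  have indZ: "prob_space.indep_vars (M n) (\<lambda>_. borel) (Z n) (K n)" for n
    using indep[of n] unfolding K_def Z_def by simp
  have rvZ: "Z n k \<in> borel_measurable (M n)" if "k \<in> K n" for n k
    using indZ[of n] that unfolding prob_space.indep_vars_def2[OF prob[of n]] by blast
  have rvX: "X n i \<in> borel_measurable (M n)" if "i \<in> I n" for n i
    using rvZ[of "Inl i" n] that by (simp add: K_def Z_def)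
  have rvY: "Y n i r \<in> borel_measurable (M n)" if "i \<in> I n" "r < R n i" for n i r
    using rvZ[of "Inr (i, r)" n] that by (simp add: K_def Z_def)
  have i1X: "integrable (M n) (X n i)" if "i \<in> I n" for n i
    using prob_space.low_moment[OF prob rvX[OF that] fourth[OF that], of 1] by simp
  have crossi: "integrable (M n) (\<lambda>x. X n i x * Y n i r x)"
    and cross: "integral\<^sup>L (M n) (\<lambda>x. X n i x * Y n i r x) = integral\<^sup>L (M n) (X n i) * integral\<^sup>L (M n) (Y n i r)"
    if "i \<in> I n" "r < R n i" for n i r
  proof -
    have iY: "integrable (M n) (Y n i r)"
      using prob_space.distr_transfer(1)[OF prob rvX[OF that(1)] rvY[OF that] _ copies[OF that], of "\<lambda>y. y"] i1X[OF that(1)]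
      by simp
    have k: "Inl i \<in> K n" "Inr (i, r) \<in> K n" "(Inl i :: 'i + 'i \<times> nat) \<noteq> Inr (i, r)" using that by (auto simp: K_def)
    have ii: "integrable (M n) (Z n (Inl i))" "integrable (M n) (Z n (Inr (i, r)))"
      using i1X[OF that(1)] iY by (simp_all add: Z_def)
    show "integrable (M n) (\<lambda>x. X n i x * Y n i r x)"
      using prob_space.pair_prod(2)[OF prob indZ k ii] by (simp add: Z_def)
    show "integral\<^sup>L (M n) (\<lambda>x. X n i x * Y n i r x) = integral\<^sup>L (M n) (X n i) * integral\<^sup>L (M n) (Y n i r)"
      using prob_space.pair_prod(1)[OF prob indZ k ii] by (simp add: Z_def)
  qed
  have blk: "integrable (M n) (\<lambda>x. W n i x ^ 4) \<and> integral\<^sup>L (M n) (W n i) = 0 \<and>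
      \<sigma>2 n i \<le> (\<integral>x. W n i x ^ 2 \<partial>M n) \<and>
      (\<integral>x. W n i x ^ 4 \<partial>M n) \<le> 16 * (\<integral>x. (X n i x - integral\<^sup>L (M n) (X n i)) ^ 4 \<partial>M n)"
    if "i \<in> I n" for n i
  proof -
    have R1': "1 \<le> R n i" using R1[OF that] by simp
    note b = prob_space.block[OF prob rvX[OF that] rvY[OF that] R1' copies[OF that] fourth[OF that] crossi[OF that] cross[OF that]]
    show ?thesis using b unfolding W_def \<sigma>2_def by simp
  qed
  have W4: "integrable (M n) (\<lambda>x. W n i x ^ 4)" if "i \<in> I n" for n i
    using blk[OF that] by simp
  have Wm0: "integral\<^sup>L (M n) (W n i) = 0" if "i \<in> I n" for n i
    using blk[OF that] by simp
  have Wvar: "\<sigma>2 n i \<le> (\<integral>x. W n i x ^ 2 \<partial>M n)" if "i \<in> I n" for n i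
    using blk[OF that] by simp
  have kurt: "(\<integral>x. (X n i x - integral\<^sup>L (M n) (X n i)) ^ 4 \<partial>M n) \<le> \<kappa>max * \<sigma>2 n i ^ 2" if "i \<in> I n" for n i
    using R2[OF that] var_pos[OF that] unfolding kurtosis_def \<sigma>2_def by (simp add: divide_le_eq)
  have W4b: "(\<integral>x. W n i x ^ 4 \<partial>M n) \<le> 16 * \<kappa>max * \<sigma>2 n i ^ 2" if "i \<in> I n" for n i
    using blk[OF that] kurt[OF that] by simp
  have rvW: "W n i \<in> borel_measurable (M n)" if "i \<in> I n" for n i
    unfolding W_def using rvX[OF that] rvY[OF that]
    by (intro borel_measurable_diff borel_measurable_divide borel_measurable_sum) auto
  have W2: "integrable (M n) (\<lambda>x. W n i x ^ 2)" if "i \<in> I n" for n i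
    using prob_space.low_moment[OF prob rvW[OF that] W4[OF that], of 2] by simp
  have indW: "prob_space.indep_vars (M n) (\<lambda>_. borel) (W n) (I n)" for n
  proof -
    define Kb where "Kb i = insert (Inl i) (Inr ` ({i} \<times> {..<R n i}))" for i
    define g where "g i f = f (Inl i) - (\<Sum>r<R n i. f (Inr (i, r))) / real (R n i)" for i and f :: "'i + 'i \<times> nat \<Rightarrow> real"
    have r1: "prob_space.indep_vars (M n) (\<lambda>i. PiM (Kb i) (\<lambda>_. borel)) (\<lambda>i \<omega>. restrict (\<lambda>k. Z n k \<omega>) (Kb i)) (I n)"
      by (rule prob_space.indep_vars_restrict[OF prob indZ]) (auto simp: Kb_def K_def disjoint_family_on_def)
    have gm: "g i \<in> borel_measurable (PiM (Kb i) (\<lambda>_. borel))" if "i \<in> I n" for i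
      unfolding g_def
      by (intro borel_measurable_diff borel_measurable_divide borel_measurable_sum measurable_component_singleton)
         (auto simp: Kb_def)
    have r2: "prob_space.indep_vars (M n) (\<lambda>_. borel) (\<lambda>i x. g i (restrict (\<lambda>k. Z n k x) (Kb i))) (I n)"
      by (rule prob_space.indep_vars_compose2[OF prob r1 gm])
    have eq: "(\<lambda>x. g i (restrict (\<lambda>k. Z n k x) (Kb i))) = W n i" if "i \<in> I n" for i
    proof
      fix x
      have "(\<Sum>r<R n i. restrict (\<lambda>k. Z n k x) (Kb i) (Inr (i, r))) = (\<Sum>r<R n i. Y n i r x)"
        by (rule sum.cong) (auto simp: Kb_def Z_def)
      then show "g i (restrict (\<lambda>k. Z n k x) (Kb i)) = W n i x"
        by (simp add: g_def W_def Kb_def Z_def)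
    qed
    have "prob_space.indep_vars (M n) (\<lambda>_. borel) (\<lambda>i x. g i (restrict (\<lambda>k. Z n k x) (Kb i))) (I n)
        = prob_space.indep_vars (M n) (\<lambda>_. borel) (W n) (I n)"
      by (rule prob_space.indep_vars_cong[OF prob]) (auto simp: eq)
    then show ?thesis using r2 by simp
  qed
  have s_eq: "s n = (\<Sum>i\<in>I n. \<integral>x. W n i x ^ 2 \<partial>M n)" for n
    unfolding s_def by (rule prob_space.sum_var[OF prob fin indW W2 Wm0])
  have ne: "eventually (\<lambda>n. I n \<noteq> {}) sequentially"
  proof -
    have "eventually (\<lambda>n. card (I n) \<ge> 1) sequentially"
      using card_lim by (simp add: filterlim_at_top)
    then show ?thesis by eventually_elim auto
  qed
  have S2pos: "(\<Sum>i\<in>I n. \<sigma>2 n i) > 0" if "I n \<noteq> {}" for n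
    using var_pos fin that unfolding \<sigma>2_def by (intro sum_pos) auto
  have sS2: "(\<Sum>i\<in>I n. \<sigma>2 n i) \<le> s n" for n
    unfolding s_eq by (intro sum_mono Wvar)
  have spos: "eventually (\<lambda>n. s n > 0) sequentially"
    using ne
  proof eventually_elim
    case (elim n)
    show ?case using S2pos[OF elim] sS2[of n] by linarith
  qed
  obtain B where B: "\<And>n. gamma_sq (M n) (I n) (X n) \<le> B" using R3 by blast
  define C where "C = 16 * \<kappa>max * (1 + B)"
  have Lb: "(\<Sum>i\<in>I n. \<integral>x. W n i x ^ 4 \<partial>M n) / s n ^ 2 \<le> C / real (card (I n))"
    and Lnn: "0 \<le> (\<Sum>i\<in>I n. \<integral>x. W n i x ^ 4 \<partial>M n) / s n ^ 2" if ne: "I n \<noteq> {}" for n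
  proof -
    define N where "N = real (card (I n))"
    define S2 where "S2 = (\<Sum>i\<in>I n. \<sigma>2 n i)"
    define S4 where "S4 = (\<Sum>i\<in>I n. \<sigma>2 n i ^ 2)"
    define T where "T = (\<Sum>i\<in>I n. \<integral>x. W n i x ^ 4 \<partial>M n)"
    have Npos: "N > 0" using ne fin[of n] unfolding N_def by (simp add: card_gt_0_iff)
    have S2p: "S2 > 0" using S2pos[OF ne] unfolding S2_def .
    have Tnn: "T \<ge> 0" unfolding T_def by (intro sum_nonneg integral_nonneg_AE) auto
    show "0 \<le> (\<Sum>i\<in>I n. \<integral>x. W n i x ^ 4 \<partial>M n) / s n ^ 2" using Tnn unfolding T_def by simp
    obtain i0 where i0: "i0 \<in> I n" using ne by blast
    have kpos: "\<kappa>max \<ge> 0"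
    proof -
      have "0 \<le> kurtosis (M n) (X n i0)" unfolding kurtosis_def
        by (intro divide_nonneg_nonneg integral_nonneg_AE) auto
      then show ?thesis using R2[OF i0] by linarith
    qed
    have TS4: "T \<le> 16 * \<kappa>max * S4" unfolding T_def S4_def sum_distrib_left
      by (intro sum_mono W4b)
    have sb: "sigma_bar_sq (M n) (I n) (X n) = S2 / N" unfolding sigma_bar_sq_def S2_def N_def \<sigma>2_def ..
    have "gamma_sq (M n) (I n) (X n) = (S4 / N - (S2 / N)^2) / (S2 / N)^2"
      unfolding gamma_sq_def sb by (simp add: S4_def N_def \<sigma>2_def)
    then have "(S4 / N - (S2 / N)^2) / (S2 / N)^2 \<le> B" using B[of n] by simp
    then have "S4 / N - (S2 / N)^2 \<le> B * (S2 / N)^2" using S2p Npos by (simp add: divide_le_eq)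
    then have "S4 / N \<le> (1 + B) * (S2 / N)^2" by (simp add: algebra_simps)
    then have "S4 \<le> (1 + B) * S2^2 / N" using Npos by (simp add: field_simps power2_eq_square)
    then have S4b: "S4 / S2^2 \<le> (1 + B) / N" using S2p Npos by (simp add: field_simps)
    have "T / s n ^ 2 \<le> T / S2 ^ 2"
      using sS2[of n] S2p Tnn unfolding S2_def by (intro divide_left_mono power_mono mult_pos_pos) auto
    also have "\<dots> \<le> 16 * \<kappa>max * S4 / S2 ^ 2" using TS4 S2p by (intro divide_right_mono) auto
    also have "\<dots> = 16 * \<kappa>max * (S4 / S2 ^ 2)" by simp
    also have "\<dots> \<le> 16 * \<kappa>max * ((1 + B) / N)" using S4b kpos by (intro mult_left_mono) auto
    also have "\<dots> = C / N" unfolding C_def by simp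
    finally show "(\<Sum>i\<in>I n. \<integral>x. W n i x ^ 4 \<partial>M n) / s n ^ 2 \<le> C / real (card (I n))"
      unfolding T_def N_def .
  qed
  have Llim: "(\<lambda>n. (\<Sum>i\<in>I n. \<integral>x. W n i x ^ 4 \<partial>M n) / s n ^ 2) \<longlonglongrightarrow> 0"
  proof (rule tendsto_sandwich[where f="\<lambda>_. 0" and h="\<lambda>n. C / real (card (I n))"])
    show "eventually (\<lambda>n. 0 \<le> (\<Sum>i\<in>I n. \<integral>x. W n i x ^ 4 \<partial>M n) / s n ^ 2) sequentially"
      using ne by eventually_elim (rule Lnn)
    show "eventually (\<lambda>n. (\<Sum>i\<in>I n. \<integral>x. W n i x ^ 4 \<partial>M n) / s n ^ 2 \<le> C / real (card (I n))) sequentially"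
      using ne by eventually_elim (rule Lb)
    have "filterlim (\<lambda>n. real (card (I n))) at_top sequentially"
      by (rule filterlim_compose[OF filterlim_real_sequentially card_lim])
    then show "(\<lambda>n. C / real (card (I n))) \<longlonglongrightarrow> 0"
      by (intro tendsto_divide_0[OF tendsto_const] filterlim_at_top_imp_at_infinity)
  qed simp
  have main: "weak_conv_m (\<lambda>n. distr (M n) borel (\<lambda>x. (\<Sum>i\<in>I n. W n i x) / sqrt (s n))) std_normal_distribution"
    by (rule clt_lyap[OF prob fin indW W4 Wm0 s_eq spos Llim])
  then show ?thesis unfolding s_def W_def .
qed

end
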